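(* Let $X=\{x_1,\dots,x_m\} \subset \mathbb{R}^n$ be a finite set of vectors, $\lambda \ge 0$, and $w_{ij} \ge 0$ for $j=2,\dots,m$, $i=1,\dots,j-1$. For $z = \begin{bmatrix} z_1^T & \dots & z_m^T\end{bmatrix}^T \in \mathbb{R}^{mn}$ (with $z_i \in \mathbb{R}^n$) define \[ \phi(z) = \sum_{i=1}^m \|x_i - z_i\|^2 + \lambda \sum_{j=2}^m \sum_{i=1}^{j-1} w_{ij}\, s\bigl(\|z_i - z_j\|\bigr), \] where $s:\mathbb{R}\to\{0,1\}$ is given by $s(0)=0$ and $s(u)=1$ for $u \neq 0$, and, for $\alpha>0$, \[ g(z;\alpha) = \sum_{i=1}^m \|x_i - z_i\|^2 + \lambda \sum_{j=2}^m \sum_{i=1}^{j-1} w_{ij}\Bigl(1 - e^{-\alpha \|z_i - z_j\|^2}\Bigr). \] Let $\{\alpha^t\}$ be a sequence of positive scalars with $\alpha^{t+1} > \alpha^t$ for all $t$ and $\lim_{t\to\infty} \alpha^t = +\infty$. For each $\alpha>0$, let $z(\alpha)$ be a global minimizer of $g(\cdot;\alpha)$ over $\mathbb{R}^{mn}$. Then: (i) the sequence $\{g(z(\alpha^t);\alpha^t)\}$ converges; (ii) the sequence $\{z(\alpha^t)\}$ has limit points; (iii) every limit point of $\{z(\alpha^t)\}$ is a global minimizer of $\phi$ over $\mathbb{R}^{mn}$.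
   Context: $\|\cdot\|$ denotes the Euclidean norm. *)

theory Defs
  imports "HOL-Analysis.Analysis"
begin

definition step_s :: "real \<Rightarrow> real" where
  "step_s u = (if u = 0 then 0 else 1)"

text \<open>A point z of R^(mn) is represented by its blocks z_1,...,z_m (z i for i in {1..m}).\<close>
definition phi :: "nat \<Rightarrow> (nat \<Rightarrow> real^'n) \<Rightarrow> real \<Rightarrow> (nat \<Rightarrow> nat \<Rightarrow> real)
                    \<Rightarrow> (nat \<Rightarrow> real^'n) \<Rightarrow> real" where
  "phi m x lam w z =
     (\<Sum>i=1..m. (norm (x i - z i))^2)
     + lam * (\<Sum>j=2..m. \<Sum>i=1..j-1. w i j * step_s (norm (z i - z j)))"

definition gfun :: "nat \<Rightarrow> (nat \<Rightarrow> real^'n) \<Rightarrow> real \<Rightarrow> (nat \<Rightarrow> nat \<Rightarrow> real)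
                    \<Rightarrow> (nat \<Rightarrow> real^'n) \<Rightarrow> real \<Rightarrow> real" where
  "gfun m x lam w z \<alpha> =
     (\<Sum>i=1..m. (norm (x i - z i))^2)
     + lam * (\<Sum>j=2..m. \<Sum>i=1..j-1. w i j * (1 - exp (- \<alpha> * (norm (z i - z j))^2)))"

text \<open>L is a limit point of the sequence of block vectors zs in R^(mn)
  (convergence of a subsequence, blockwise = in R^(mn)).\<close>
definition is_limit_point :: "nat \<Rightarrow> (nat \<Rightarrow> nat \<Rightarrow> real^'n) \<Rightarrow> (nat \<Rightarrow> real^'n) \<Rightarrow> bool" where
  "is_limit_point m zs L \<longleftrightarrow>
     (\<exists>r. strict_mono r \<and> (\<forall>i\<in>{1..m}. (\<lambda>t. zs (r t) i) \<longlonglongrightarrow> L i))"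

end

theory Submission
  imports Defs
begin

lemma exp_neg_to0:
  assumes "filterlim y at_top F"
  shows "((\<lambda>t. exp (- y t)) \<longlongrightarrow> (0::real)) F"
proof -
  have "filterlim (\<lambda>t. - y t) at_bot F"
    using filterlim_compose[OF filterlim_uminus_at_bot_at_top assms] .
  from filterlim_compose[OF exp_at_bot this] show ?thesis .
qed

lemma multi_subseq:
  fixes f :: "nat \<Rightarrow> nat \<Rightarrow> 'a::heine_borel"
  assumes "\<forall>i\<in>{1..k}. bounded (range (\<lambda>t. f t i))"
  shows "\<exists>r L. strict_mono r \<and> (\<forall>i\<in>{1..k}. (\<lambda>t. f (r t) i) \<longlonglongrightarrow> L i)"
  using assms
proof (induction k)
  case 0
  then show ?case by (auto intro: strict_mono_id[unfolded id_def])
next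
  case (Suc k)
  then obtain r L where r: "strict_mono r" and L: "\<forall>i\<in>{1..k}. (\<lambda>t. f (r t) i) \<longlonglongrightarrow> L i"
    by auto
  have "bounded (range (\<lambda>t. f t (Suc k)))" using Suc.prems by auto
  hence "bounded (range (\<lambda>t. f (r t) (Suc k)))"
    by (rule bounded_subset) auto
  from bounded_imp_convergent_subsequence[OF this] obtain l q where
    q: "strict_mono q" and l: "((\<lambda>t. f (r t) (Suc k)) \<circ> q) \<longlonglongrightarrow> l" by blast
  have "strict_mono (r \<circ> q)" using r q by (simp add: strict_mono_o)
  moreover have "\<forall>i\<in>{1..Suc k}. (\<lambda>t. f ((r \<circ> q) t) i) \<longlonglongrightarrow> (L(Suc k := l)) i"
  proof
    fix i assume i: "i \<in> {1..Suc k}"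
    show "(\<lambda>t. f ((r \<circ> q) t) i) \<longlonglongrightarrow> (L(Suc k := l)) i"
    proof (cases "i = Suc k")
      case True
      then show ?thesis using l by (simp add: o_def)
    next
      case False
      then have "i \<in> {1..k}" using i by auto
      with L have "(\<lambda>t. f (r t) i) \<longlonglongrightarrow> L i" by auto
      from LIMSEQ_subseq_LIMSEQ[OF this q] show ?thesis using False by (simp add: o_def)
    qed
  qed
  ultimately show ?case by blast
qed

theorem theorem1:
  fixes m :: nat and x :: "nat \<Rightarrow> real^'n" and lam :: real
    and w :: "nat \<Rightarrow> nat \<Rightarrow> real" and a :: "nat \<Rightarrow> real"
    and zopt :: "real \<Rightarrow> nat \<Rightarrow> real^'n"
  assumes "inj_on x {1..m}"
    and "lam \<ge> 0"
    and "\<And>i j. 2 \<le> j \<Longrightarrow> j \<le> m \<Longrightarrow> 1 \<le> i \<Longrightarrow> i \<le> j - 1 \<Longrightarrow> w i j \<ge> 0"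
    and "\<And>t. a t > 0"
    and "\<And>t. a (Suc t) > a t"
    and "filterlim a at_top sequentially"
    and "\<And>\<alpha> z. \<alpha> > 0 \<Longrightarrow> gfun m x lam w (zopt \<alpha>) \<alpha> \<le> gfun m x lam w z \<alpha>"
  shows "convergent (\<lambda>t. gfun m x lam w (zopt (a t)) (a t))
    \<and> (\<exists>L. is_limit_point m (\<lambda>t. zopt (a t)) L)
    \<and> (\<forall>L. is_limit_point m (\<lambda>t. zopt (a t)) L \<longrightarrow> (\<forall>z. phi m x lam w L \<le> phi m x lam w z))"
proof -
  note lam = assms(2) and wpos = assms(3) and apos = assms(4) and opt = assms(7)
  define W where "W = (\<Sum>j=2..m. \<Sum>i=1..j-1. w i j)"
  define F where "F z = (\<Sum>i=1..m. (norm (x i - z i))^2)" for z :: "nat \<Rightarrow> real^'n"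
  define P where "P z \<alpha> = (\<Sum>j=2..m. \<Sum>i=1..j-1. w i j * (1 - exp (- \<alpha> * (norm (z i - z j))^2)))"
    for z :: "nat \<Rightarrow> real^'n" and \<alpha> :: real
  have g_eq: "gfun m x lam w z \<alpha> = F z + lam * P z \<alpha>" for z \<alpha>
    by (simp add: gfun_def F_def P_def)
  have F_nn: "F z \<ge> 0" for z unfolding F_def by (intro sum_nonneg) auto
  have P_nn: "P z \<alpha> \<ge> 0" if "\<alpha> \<ge> 0" for z \<alpha>
    unfolding P_def using that wpos by (intro sum_nonneg mult_nonneg_nonneg) (auto simp: mult_nonneg_nonneg)
  have P_le: "P z \<alpha> \<le> W" for z \<alpha>
    unfolding P_def W_def using wpos by (intro sum_mono) (auto intro!: mult_left_le)
  have P_mono: "P z \<alpha> \<le> P z \<beta>" if "\<alpha> \<le> \<beta>" for z \<alpha> \<beta>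
    unfolding P_def
  proof (intro sum_mono mult_left_mono)
    fix j i assume j: "j \<in> {2..m}" and i: "i \<in> {1..j-1}"
    show "w i j \<ge> 0" using wpos j i by auto
    have "- \<beta> * (norm (z i - z j))^2 \<le> - \<alpha> * (norm (z i - z j))^2"
      using that by (intro mult_right_mono) auto
    then show "1 - exp (- \<alpha> * (norm (z i - z j))^2) \<le> 1 - exp (- \<beta> * (norm (z i - z j))^2)"
      by simp
  qed
  have g_x: "gfun m x lam w x \<alpha> \<le> lam * W" for \<alpha>
    using P_le[of x \<alpha>] lam by (simp add: g_eq F_def mult_left_mono)
  define G where "G t = gfun m x lam w (zopt (a t)) (a t)" for t
  have G_le: "G t \<le> lam * W" for t
    using opt[OF apos, of t x] g_x[of "a t"] by (simp add: G_def)
  have "incseq G"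
  proof (rule incseq_SucI)
    fix t
    have "G t \<le> gfun m x lam w (zopt (a (Suc t))) (a t)"
      unfolding G_def by (rule opt[OF apos])
    also have "\<dots> \<le> G (Suc t)"
      unfolding G_def g_eq using P_mono[of "a t" "a (Suc t)"] assms(5)[of t] lam
      by (auto intro!: mult_left_mono)
    finally show "G t \<le> G (Suc t)" .
  qed
  then obtain Gl where "G \<longlonglongrightarrow> Gl" using G_le by (metis incseq_convergent)
  hence part1: "convergent G" by (auto simp: convergent_def)
  have Fbound: "F (zopt (a t)) \<le> lam * W" for t
  proof -
    have "F (zopt (a t)) \<le> G t" unfolding G_def g_eq
      using P_nn[of "a t"] apos[of t] lam by (auto intro: order_less_imp_le)
    with G_le[of t] show ?thesis by linarith
  qed
  have part2: "\<exists>L. is_limit_point m (\<lambda>t. zopt (a t)) L"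
  proof -
    have "\<forall>i\<in>{1..m}. bounded (range (\<lambda>t. zopt (a t) i))"
    proof
      fix i assume i: "i \<in> {1..m}"
      have nb: "norm (x i - zopt (a t) i) \<le> sqrt (lam * W)" for t
      proof -
        have "(norm (x i - zopt (a t) i))^2 \<le> F (zopt (a t))"
          unfolding F_def using i by (intro member_le_sum) auto
        with Fbound[of t] have "(norm (x i - zopt (a t) i))^2 \<le> lam * W" by linarith
        thus ?thesis by (rule real_le_rsqrt)
      qed
      have "norm (zopt (a t) i) \<le> norm (x i) + sqrt (lam * W)" for t
      proof -
        have "norm (zopt (a t) i) = norm (x i - (x i - zopt (a t) i))" by simp
        also have "\<dots> \<le> norm (x i) + norm (x i - zopt (a t) i)" by (rule norm_triangle_ineq4)
        finally show ?thesis using nb[of t] by linarith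
      qed
      thus "bounded (range (\<lambda>t. zopt (a t) i))"
        unfolding bounded_iff by (intro exI[of _ "norm (x i) + sqrt (lam * W)"]) blast
    qed
    from multi_subseq[OF this] show ?thesis unfolding is_limit_point_def by blast
  qed
  have part3: "phi m x lam w L \<le> phi m x lam w z"
    if lp: "is_limit_point m (\<lambda>t. zopt (a t)) L" for L z
  proof -
    from lp obtain r where r: "strict_mono r"
      and conv: "\<forall>i\<in>{1..m}. (\<lambda>t. zopt (a (r t)) i) \<longlonglongrightarrow> L i"
      unfolding is_limit_point_def by blast
    define zs where "zs t = zopt (a (r t))" for t
    define al where "al t = a (r t)" for t
    have al_top: "filterlim al at_top sequentially"
      unfolding al_def using filterlim_compose[OF assms(6) filterlim_subseq[OF r]] .
    define c where "c i j t = (if L i = L j then 0 else 1 - exp (- al t * (norm (zs t i - zs t j))^2))"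
      for i j t
    define h where "h t = F (zs t) + lam * (\<Sum>j=2..m. \<Sum>i=1..j-1. w i j * c i j t)" for t
    have zconv: "(\<lambda>t. zs t i) \<longlonglongrightarrow> L i" if "i \<in> {1..m}" for i
      using conv that by (simp add: zs_def)
    have c_conv: "(\<lambda>t. c i j t) \<longlonglongrightarrow> step_s (norm (L i - L j))"
      if "i \<in> {1..m}" "j \<in> {1..m}" for i j
    proof (cases "L i = L j")
      case True then show ?thesis by (simp add: c_def step_s_def)
    next
      case False
      have d: "(\<lambda>t. (norm (zs t i - zs t j))^2) \<longlonglongrightarrow> (norm (L i - L j))^2"
        by (intro tendsto_intros zconv that)
      have pos: "(norm (L i - L j))^2 > 0" using False by simp
      have "filterlim (\<lambda>t. (norm (zs t i - zs t j))^2 * al t) at_top sequentially"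
        by (rule filterlim_tendsto_pos_mult_at_top[OF d pos al_top])
      from exp_neg_to0[OF this]
      have "(\<lambda>t. exp (- al t * (norm (zs t i - zs t j))^2)) \<longlonglongrightarrow> 0"
        by (simp add: mult.commute)
      hence "(\<lambda>t. 1 - exp (- al t * (norm (zs t i - zs t j))^2)) \<longlonglongrightarrow> 1 - 0"
        by (intro tendsto_intros)
      then show ?thesis using False by (simp add: c_def step_s_def)
    qed
    have h1: "(\<lambda>t. F (zs t)) \<longlonglongrightarrow> (\<Sum>i=1..m. (norm (x i - L i))^2)"
      unfolding F_def
    proof (rule tendsto_sum)
      fix i assume "i \<in> {1..m}"
      then show "(\<lambda>t. (norm (x i - zs t i))^2) \<longlonglongrightarrow> (norm (x i - L i))^2"
        by (intro tendsto_intros zconv)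
    qed
    have h2: "(\<lambda>t. \<Sum>j=2..m. \<Sum>i=1..j-1. w i j * c i j t) \<longlonglongrightarrow>
        (\<Sum>j=2..m. \<Sum>i=1..j-1. w i j * step_s (norm (L i - L j)))"
    proof (rule tendsto_sum)
      fix j assume j: "j \<in> {2..m}"
      show "(\<lambda>t. \<Sum>i=1..j-1. w i j * c i j t) \<longlonglongrightarrow> (\<Sum>i=1..j-1. w i j * step_s (norm (L i - L j)))"
      proof (rule tendsto_sum)
        fix i assume i: "i \<in> {1..j-1}"
        show "(\<lambda>t. w i j * c i j t) \<longlonglongrightarrow> w i j * step_s (norm (L i - L j))"
          using i j by (intro tendsto_mult_left c_conv) auto
      qed
    qed
    have h_conv: "h \<longlonglongrightarrow> phi m x lam w L"
      unfolding h_def phi_def by (intro tendsto_add tendsto_mult_left h1 h2)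
    have h_le: "h t \<le> phi m x lam w z" for t
    proof -
      have "(\<Sum>j=2..m. \<Sum>i=1..j-1. w i j * c i j t) \<le> P (zs t) (al t)"
        unfolding P_def
      proof (intro sum_mono mult_left_mono)
        fix j i assume j: "j \<in> {2..m}" and i: "i \<in> {1..j-1}"
        show "w i j \<ge> 0" using wpos j i by auto
        have "- al t * (norm (zs t i - zs t j))^2 \<le> 0"
          using apos[of "r t"] by (simp add: al_def)
        then show "c i j t \<le> 1 - exp (- al t * (norm (zs t i - zs t j))^2)"
          by (simp add: c_def)
      qed
      hence "h t \<le> gfun m x lam w (zs t) (al t)"
        unfolding h_def g_eq using lam by (auto intro: mult_left_mono)
      also have "\<dots> \<le> gfun m x lam w z (al t)"
        unfolding zs_def al_def by (rule opt[OF apos])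
      also have "\<dots> \<le> phi m x lam w z"
      proof -
        have "P z (al t) \<le> (\<Sum>j=2..m. \<Sum>i=1..j-1. w i j * step_s (norm (z i - z j)))"
          unfolding P_def
        proof (intro sum_mono mult_left_mono)
          fix j i assume j: "j \<in> {2..m}" and i: "i \<in> {1..j-1}"
          show "w i j \<ge> 0" using wpos j i by auto
          show "1 - exp (- al t * (norm (z i - z j))^2) \<le> step_s (norm (z i - z j))"
            by (simp add: step_s_def)
        qed
        thus ?thesis unfolding g_eq phi_def F_def using lam by (auto intro: mult_left_mono)
      qed
      finally show ?thesis .
    qed
    show ?thesis using LIMSEQ_le_const2[OF h_conv] h_le by blast
  qed
  have "G = (\<lambda>t. gfun m x lam w (zopt (a t)) (a t))" by (simp add: G_def fun_eq_iff)
  then show ?thesis using part1 part2 part3 by auto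
qed

end
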